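(* The numbers $P_{1^{-1}6^{1}10^{1}15^{-1}}(n)$, defined by $\sum_{n\ge0}P_{1^{-1}6^{1}10^{1}15^{-1}}(n)q^n=\frac{f_6f_{10}}{f_1f_{15}}$, form a $2$-convolutive sequence.
   Context: $f_i:=(q^i;q^i)_\infty=\prod_{k\ge1}(1-q^{ik})$. A sequence $(a_n)_{n\ge0}$ is $m$-convolutive if $\sum_{n\ge0}a_{mn}q^n=\big(\sum_{n\ge0}a_nq^n\big)^m$. *)

theory Defs
  imports "HOL-Computational_Algebra.Formal_Power_Series"
begin

text \<open>f_i = (q^i;q^i)_\<infinity> = prod_{k>=1} (1 - q^{ik}) as a formal power series:
  its n-th coefficient is the n-th coefficient of the finite product over k = 1..n
  (factors with k > n do not affect coefficients of degree \<le> n when i \<ge> 1).\<close>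
definition euler_f :: "nat \<Rightarrow> rat fps" where
  "euler_f i = Abs_fps (\<lambda>n. fps_nth (\<Prod>k\<in>{1..n}. (1 - fps_X ^ (i * k))) n)"

definition P_gf :: "rat fps" where
  "P_gf = euler_f 6 * euler_f 10 * inverse (euler_f 1 * euler_f 15)"

definition P :: "nat \<Rightarrow> rat" where
  "P n = fps_nth P_gf n"

definition convolutive :: "nat \<Rightarrow> (nat \<Rightarrow> 'a::comm_ring_1) \<Rightarrow> bool" where
  "convolutive m a \<longleftrightarrow> Abs_fps (\<lambda>n. a (m * n)) = (Abs_fps a) ^ m"

end

theory Submission
  imports Defs
begin

unbundle fps_syntax


definition teq :: "nat \<Rightarrow> 'a::comm_ring_1 fps \<Rightarrow> 'a fps \<Rightarrow> bool" where
  "teq M A B \<longleftrightarrow> (\<forall>i<M. A $ i = B $ i)"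

lemma teq_refl[simp]: "teq M A A" by (simp add: teq_def)
lemma teq_sym: "teq M A B \<Longrightarrow> teq M B A" by (simp add: teq_def)
lemma teq_trans: "teq M A B \<Longrightarrow> teq M B C \<Longrightarrow> teq M A C" by (simp add: teq_def)
lemma teq_mono: "teq M A B \<Longrightarrow> K \<le> M \<Longrightarrow> teq K A B" by (simp add: teq_def)

lemma teq_mult: "teq M A B \<Longrightarrow> teq M C D \<Longrightarrow> teq M (A*C) (B*D)"
  unfolding teq_def fps_mult_nth by (auto intro!: sum.cong)

lemma teq_add: "teq M A B \<Longrightarrow> teq M C D \<Longrightarrow> teq M (A+C) (B+D)"
  unfolding teq_def by auto

lemma teq_sum: "(\<And>x. x \<in> S \<Longrightarrow> teq M (f x) (g x)) \<Longrightarrow> teq M (sum f S) (sum g S)"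
  unfolding teq_def fps_sum_nth by (auto intro!: sum.cong)

lemma teq_eq: "(\<And>M. teq M A B) \<Longrightarrow> A = B"
  unfolding teq_def by (metis fps_ext lessI)

lemma teq_Xpow: "K \<le> k \<Longrightarrow> teq K (fps_X^k * A) 0"
  unfolding teq_def by (simp add: fps_X_power_mult_nth)

lemma teq_inverse:
  fixes A B :: "'a::field fps"
  assumes "teq M A B" "A $ 0 \<noteq> 0" "B $ 0 \<noteq> 0"
  shows "teq M (inverse A) (inverse B)"
proof -
  have "teq M (inverse A * B * inverse B) (inverse A * A * inverse B)"
    by (intro teq_mult teq_refl teq_sym[OF assms(1)])
  moreover have "inverse A * B * inverse B = inverse A"
    using inverse_mult_eq_1'[OF assms(3)] by (simp add: mult.assoc)
  moreover have "inverse A * A * inverse B = inverse B"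
    using inverse_mult_eq_1[OF assms(2)] by simp
  ultimately show ?thesis by simp
qed

lemma teq_prod: "(\<And>x. x \<in> S \<Longrightarrow> teq M (f x) (g x)) \<Longrightarrow> teq M (prod f S) (prod g S)"
proof (induction S rule: infinite_finite_induct)
  case (insert x F) then show ?case by (simp add: teq_mult)
qed auto

lemma teq_one_factor: "k \<ge> M \<Longrightarrow> teq M (1 - fps_X^k) 1"
  unfolding teq_def by auto


definition pp :: "'a::comm_ring_1 fps \<Rightarrow> nat \<Rightarrow> 'a fps" where
  "pp p m = (\<Prod>i<m. (1 - p ^ Suc i))"

lemma pp_0[simp]: "pp p 0 = 1" by (simp add: pp_def)
lemma pp_Suc: "pp p (Suc m) = pp p m * (1 - p ^ Suc m)"
  by (simp add: pp_def)

lemma pp_nth0: "p $ 0 = 0 \<Longrightarrow> pp p m $ 0 = 1"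
  by (induction m) (simp_all add: pp_Suc fps_mult_nth)

lemma pp_X_trunc:
  assumes "a \<ge> 1" "K \<le> N"
  shows "teq (Suc K) (pp (fps_X ^ a) N) (pp (fps_X ^ a) K)"
  using assms(2)
proof (induction N rule: dec_induct)
  case (step n)
  have "Suc n \<le> a * Suc n" using mult_le_mono1[OF assms(1), of "Suc n"] by simp
  then have "Suc K \<le> a * Suc n" using step(1) by linarith
  then have "teq (Suc K) (1 - (fps_X ^ a) ^ Suc n :: 'a fps) 1"
    unfolding power_mult[symmetric] by (rule teq_one_factor)
  from teq_mult[OF step(3) this] show ?case by (simp add: pp_Suc)
qed simp

lemma euler_f_nth_pp:
  "euler_f a $ i = pp (fps_X ^ a) i $ i"
proof -
  have "(\<Prod>k\<in>{1..i}. (1 - fps_X ^ (a * k) :: rat fps)) = pp (fps_X ^ a) i"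
    unfolding pp_def using prod.atLeast1_atMost_eq[of "\<lambda>k. (1 - fps_X ^ (a * k) :: rat fps)" i]
    by (simp only: power_mult One_nat_def)
  then show ?thesis by (simp add: euler_f_def)
qed

lemma euler_trunc:
  assumes "a \<ge> 1" "M \<le> N"
  shows "teq M (euler_f a) (pp (fps_X ^ a) N)"
  unfolding teq_def
proof (intro allI impI)
  fix i assume "i < M"
  have "teq (Suc i) (pp (fps_X ^ a) N) (pp (fps_X ^ a) i)"
    using pp_X_trunc[OF assms(1), of i N] \<open>i < M\<close> assms by simp
  then show "euler_f a $ i = pp (fps_X ^ a) N $ i"
    unfolding teq_def euler_f_nth_pp by (metis lessI)
qed

lemma euler_f_nth0: "euler_f a $ 0 = 1"
  by (simp add: euler_f_def)


fun cc :: "'a::comm_ring_1 fps \<Rightarrow> nat \<Rightarrow> nat \<Rightarrow> 'a fps" where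
  "cc p 0 m = (if m = 0 then 1 else 0)"
| "cc p (Suc N) m = cc p N m + (if m = 0 then 0 else p ^ N * cc p N (m - 1))"

lemma cc_gt: "N < m \<Longrightarrow> cc p N m = 0"
  by (induction N arbitrary: m) auto

lemma qbin:
  fixes x y p :: "'a::comm_ring_1 fps"
  shows "(\<Prod>i<N. (x + p ^ i * y)) = (\<Sum>m\<le>N. cc p N m * y ^ m * x ^ (N - m))"
proof (induction N)
  case 0 then show ?case by simp
next
  case (Suc N)
  have A: "(\<Sum>m\<le>Suc N. cc p N m * y ^ m * x ^ (Suc N - m)) = (\<Sum>m\<le>N. cc p N m * y ^ m * x ^ (N - m)) * x"
    by (auto simp add: cc_gt sum_distrib_right Suc_diff_le mult.assoc intro!: sum.cong)
  have B: "(\<Sum>m\<le>Suc N. (if m = 0 then 0 else p ^ N * cc p N (m - 1)) * y ^ m * x ^ (Suc N - m))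
        = (\<Sum>m\<le>N. cc p N m * y ^ m * x ^ (N - m)) * (p ^ N * y)"
    by (subst sum.atMost_Suc_shift) (simp add: sum_distrib_left sum_distrib_right mult_ac)
  have "(\<Prod>i<Suc N. (x + p ^ i * y)) = (\<Sum>m\<le>N. cc p N m * y ^ m * x ^ (N - m)) * (x + p ^ N * y)"
    by (simp add: Suc)
  also have "\<dots> = (\<Sum>m\<le>Suc N. cc p N m * y ^ m * x ^ (Suc N - m))
     + (\<Sum>m\<le>Suc N. (if m = 0 then 0 else p ^ N * cc p N (m - 1)) * y ^ m * x ^ (Suc N - m))"
    unfolding A B by (simp add: distrib_left)
  also have "\<dots> = (\<Sum>m\<le>Suc N. cc p (Suc N) m * y ^ m * x ^ (Suc N - m))"
    by (simp add: sum.distrib[symmetric] distrib_right)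
  finally show ?case .
qed

definition tri :: "nat \<Rightarrow> nat" where "tri m = (\<Sum>i<m. i)"
lemma tri_0[simp]: "tri 0 = 0" by (simp add: tri_def)
lemma tri_Suc: "tri (Suc m) = tri m + m" by (simp add: tri_def)
lemma tri_2: "2 * tri m + m = m * m"
  by (induction m) (auto simp: tri_Suc algebra_simps)

lemma ring_aux1:
  fixes a b pm pk pNm pNk t u P :: "'a::comm_ring_1"
  assumes "pNk = pNm * t" "pm = pk * u"
  shows "(a + P * b) * pm * pNk = (a * pm * pNm) * t + P * (b * pk * pNk) * u"
  using assms by (simp add: algebra_simps)

lemma ring_aux2:
  fixes A B C E F H :: "'a::comm_ring_1"
  assumes "E * B = F * H"
  shows "H * C * (1 - F) + E * B * C * (1 - A) = H * C * ((1 - F) + F * (1 - A))"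
proof -
  have "E * B * C * (1 - A) = H * C * (F * (1 - A))" using assms by (simp add: mult_ac)
  then show ?thesis by (simp add: distrib_left)
qed

lemma ring_aux3:
  fixes A B C F G H :: "'a::comm_ring_1"
  assumes "F * A = G"
  shows "B * C * ((1 - F) + F * (1 - A)) = B * (C * (1 - G))"
  using assms by (simp add: algebra_simps)

lemma cc_closed:
  "m \<le> N \<Longrightarrow> cc p N m * pp p m * pp p (N - m) = p ^ tri m * pp p N"
proof (induction N arbitrary: m)
  case 0 then show ?case by simp
next
  case (Suc N)
  show ?case
  proof (cases "m = 0")
    case True
    have "cc p K 0 = 1" for K by (induction K) auto
    then show ?thesis using True by simp
  next
    case False
    then obtain k where k: "m = Suc k" by (cases m) auto
    show ?thesis
    proof (cases "m = Suc N")
      case True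
      have "cc p (Suc N) m * pp p m * pp p (Suc N - m) = p ^ N * (cc p N N * pp p N * pp p (N - N)) * (1 - p ^ Suc N)"
        using True by (simp add: cc_gt pp_Suc mult_ac)
      also have "\<dots> = p ^ tri m * pp p (Suc N)"
        unfolding Suc.IH[OF le_refl] using True by (simp add: tri_Suc pp_Suc power_add mult_ac)
      finally show ?thesis .
    next
      case False
      with Suc.prems k have kN: "k < N" by simp
      have "Suc N - m = Suc (N - m)" using kN k by simp
      then have e1: "pp p (Suc N - m) = pp p (N - m) * (1 - p ^ (Suc N - m))"
        by (simp add: pp_Suc)
      have e2: "pp p m = pp p k * (1 - p ^ m)" using k by (simp add: pp_Suc)
      have e3: "N - k = Suc N - m" using k by simp
      have I1: "cc p N m * pp p m * pp p (N - m) = p ^ tri m * pp p N"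
        using Suc.IH[of m] kN k by simp
      have I2: "cc p N k * pp p k * pp p (N - k) = p ^ tri k * pp p N"
        using Suc.IH[of k] kN by simp
      have "cc p (Suc N) m * pp p m * pp p (Suc N - m)
          = (cc p N m * pp p m * pp p (N - m)) * (1 - p ^ (Suc N - m))
            + p ^ N * (cc p N k * pp p k * pp p (N - k)) * (1 - p ^ m)"
      proof -
        have cE: "cc p (Suc N) m = cc p N m + p ^ N * cc p N k" using k by simp
        show ?thesis unfolding cE e3 by (rule ring_aux1[OF e1 e2])
      qed
      also have "\<dots> = p ^ tri m * pp p N * (1 - p ^ (Suc N - m)) + p ^ N * p ^ tri k * pp p N * (1 - p ^ m)"
        unfolding I1 I2 by (simp add: mult_ac)
      also have "\<dots> = p ^ tri m * pp p N * ((1 - p ^ (Suc N - m)) + p ^ (Suc N - m) * (1 - p ^ m))"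
      proof (rule ring_aux2)
        show "p ^ N * p ^ tri k = p ^ (Suc N - m) * p ^ tri m"
          using kN k by (simp add: tri_Suc flip: power_add)
      qed
      also have "\<dots> = p ^ tri m * pp p (Suc N)"
      proof -
        have "Suc N - m + m = Suc N" using kN k by simp
        then have "p ^ (Suc N - m) * p ^ m = p ^ Suc N" by (metis power_add)
        from ring_aux3[OF this] show ?thesis unfolding pp_Suc by simp
      qed
      finally show ?thesis .
    qed
  qed
qed


abbreviation XX :: "rat fps" where "XX \<equiv> fps_X"

lemma prod_lessThan_add: "(\<Prod>i<a+b. f i) = (\<Prod>i<a. f i) * (\<Prod>i<b. f (a + i))"
  for f :: "nat \<Rightarrow> 'a::comm_monoid_mult"
  by (induction b) (simp_all add: mult_ac)

definition Odd :: "nat \<Rightarrow> rat fps" where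
  "Odd n = (\<Prod>j<2*n. (1 + XX ^ (2*j+1)))"

lemma Odd_split: "Odd n = (\<Prod>i<n. (1 + XX ^ (4*i+1))) * (\<Prod>i<n. (1 + XX ^ (4*i+3)))"
proof (induction n)
  case 0 then show ?case by (simp add: Odd_def)
next
  case (Suc n)
  have e: "2 * Suc n = Suc (Suc (2*n))" by simp
  have "Odd (Suc n) = Odd n * (1 + XX ^ (2*(2*n)+1)) * (1 + XX ^ (2*Suc(2*n)+1))"
    unfolding Odd_def by (simp only: e prod.lessThan_Suc)
  also have "2*(2*n)+1 = 4*n+1" by simp
  also have "2*Suc(2*n)+1 = 4*n+3" by simp
  finally show ?case using Suc by (simp only: prod.lessThan_Suc mult_ac)
qed

definition CC :: "nat \<Rightarrow> nat" where "CC n = 4 * tri n + n * (4*n - 1)"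

lemma FI1:
  assumes "n \<ge> 1"
  shows "(\<Prod>i<2*n. (XX ^ (4*n-1) + (XX^4) ^ i * 1)) = XX ^ CC n * Odd n"
proof -
  have s: "(\<Prod>i<2*n. (XX ^ (4*n-1) + (XX^4) ^ i * 1))
      = (\<Prod>i<n. (XX ^ (4*n-1) + XX ^ (4*i))) * (\<Prod>i<n. (XX ^ (4*n-1) + XX ^ (4*(n+i))))"
    using prod_lessThan_add[of "\<lambda>i. XX ^ (4*n-1) + (XX^4) ^ i * 1" n n]
    by (simp only: mult_2 power_mult[symmetric] mult_1_right)
  have a: "(\<Prod>i<n. (XX ^ (4*n-1) + XX ^ (4*i))) = (\<Prod>i<n. XX ^ (4*i) * (1 + XX ^ (4*(n - Suc i)+3)))"
  proof (rule prod.cong)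
    fix i assume "i \<in> {..<n}"
    then have "4*i + (4*(n - Suc i)+3) = 4*n-1" by auto
    then show "XX ^ (4*n-1) + XX ^ (4*i) = XX ^ (4*i) * (1 + XX ^ (4*(n - Suc i)+3))"
      by (simp add: distrib_left flip: power_add)
  qed simp
  also have "\<dots> = XX ^ (4 * tri n) * (\<Prod>i<n. (1 + XX ^ (4*i+3)))"
    using prod.nat_diff_reindex[of "\<lambda>i. 1 + XX ^ (4*i+3)" n]
    by (simp add: prod.distrib tri_def power_sum sum_distrib_left)
  finally have a': "(\<Prod>i<n. (XX ^ (4*n-1) + XX ^ (4*i))) = XX ^ (4 * tri n) * (\<Prod>i<n. (1 + XX ^ (4*i+3)))" .
  have b: "(\<Prod>i<n. (XX ^ (4*n-1) + XX ^ (4*(n+i)))) = (\<Prod>i<n. XX ^ (4*n-1) * (1 + XX ^ (4*i+1)))"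
  proof (rule prod.cong)
    fix i assume "i \<in> {..<n}"
    have "4*n-1 + (4*i+1) = 4*(n+i)" using assms by auto
    then have "XX ^ (4*n-1) * XX ^ (4*i+1) = XX ^ (4*(n+i))" by (metis power_add)
    then show "XX ^ (4*n-1) + XX ^ (4*(n+i)) = XX ^ (4*n-1) * (1 + XX ^ (4*i+1))"
      by (simp only: distrib_left mult_1_right)
  qed simp
  also have "\<dots> = XX ^ (n * (4*n-1)) * (\<Prod>i<n. (1 + XX ^ (4*i+1)))"
  proof -
    have "(XX^(4*n-1))^n = XX^(n*(4*n-1))" by (metis power_mult mult.commute)
    then show ?thesis by (simp only: prod.distrib prod_constant card_lessThan)
  qed
  finally have b': "(\<Prod>i<n. (XX ^ (4*n-1) + XX ^ (4*(n+i)))) = XX ^ (n * (4*n-1)) * (\<Prod>i<n. (1 + XX ^ (4*i+1)))" .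
  show ?thesis unfolding s a' b' Odd_split CC_def power_add by (simp add: mult_ac)
qed


definition EE :: "nat \<Rightarrow> nat \<Rightarrow> nat" where
  "EE n m = nat (2*(int m - int n)^2 - (int m - int n))"

lemma EE_nonneg: "(0::int) \<le> 2*j^2 - j"
proof -
  have sq: "2*j^2 - j = 2*(j*j) - j" by (simp add: power2_eq_square)
  have a: "0 \<le> j*j" by simp
  have b: "j \<le> 0 \<or> j \<le> j*j" by (cases "j \<le> 0") (auto simp: mult_le_cancel_left1)
  from a b sq show ?thesis by linarith
qed

lemma exp_id:
  assumes "m \<le> 2*n" "n \<ge> 1"
  shows "4*tri m + (4*n-1)*(2*n-m) = CC n + EE n m"
proof -
  have "int (2 * tri m + m) = int (m * m)" using tri_2[of m] by simp
  then have t: "2 * int (tri m) + int m = int m * int m" by simp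
  have "int (2 * tri n + n) = int (n * n)" using tri_2[of n] by simp
  then have t2: "2 * int (tri n) + int n = int n * int n" by simp
  have key: "4 * int (tri m) + (4*int n - 1)*(2*int n - int m) = 4 * int (tri n) + int n * (4*int n - 1) + (2*(int m - int n)^2 - (int m - int n))"
    using t t2 by algebra
  have e: "int (EE n m) = 2*(int m - int n)^2 - (int m - int n)"
    unfolding EE_def using EE_nonneg by simp
  have d: "int ((4*n-1)*(2*n-m)) = (4*int n - 1)*(2*int n - int m)"
    using assms by (simp add: of_nat_diff)
  have d2: "int (n*(4*n-1)) = int n * (4*int n - 1)"
    using assms by (simp add: of_nat_diff)
  have "int (4*tri m + (4*n-1)*(2*n-m)) = int (CC n + EE n m)"
    unfolding CC_def of_nat_add e d d2 using key by simp
  then show ?thesis by (simp only: of_nat_eq_iff)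
qed

lemma pp4_nth0: "pp (XX^4) m $ 0 = 1"
  by (rule pp_nth0) simp

lemma FI:
  assumes "n \<ge> 1"
  shows "Odd n = (\<Sum>m\<le>2*n. XX ^ EE n m * pp (XX^4) (2*n) * inverse (pp (XX^4) m * pp (XX^4) (2*n-m)))"
proof -
  let ?p = "XX^4"
  let ?U = "\<lambda>m. pp ?p m * pp ?p (2*n-m)"
  have U0: "?U m $ 0 = 1" for m by (simp add: fps_mult_nth_0 pp4_nth0)
  have tm: "cc ?p (2*n) m * 1 ^ m * (XX ^ (4*n-1)) ^ (2*n-m)
      = XX ^ CC n * (XX ^ EE n m * pp ?p (2*n) * inverse (?U m))" if "m \<le> 2*n" for m
  proof -
    have "cc ?p (2*n) m = cc ?p (2*n) m * (?U m * inverse (?U m))"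
      using inverse_mult_eq_1'[of "?U m"] U0[of m] by (simp add: pp4_nth0)
    also have "\<dots> = (cc ?p (2*n) m * pp ?p m * pp ?p (2*n-m)) * inverse (?U m)"
      by (simp add: mult_ac)
    also have "\<dots> = XX ^ (4 * tri m) * pp ?p (2*n) * inverse (?U m)"
      using cc_closed[OF that, of ?p] by (simp add: power_mult)
    finally have c: "cc ?p (2*n) m = XX ^ (4 * tri m) * pp ?p (2*n) * inverse (?U m)" .
    have "XX ^ (4 * tri m) * (XX ^ (4*n-1)) ^ (2*n-m) = XX ^ CC n * XX ^ EE n m"
      using exp_id[OF that assms] by (metis power_add power_mult)
    then show ?thesis unfolding c by (simp add: mult_ac)
  qed
  have "XX ^ CC n * Odd n = (\<Prod>i<2*n. (XX ^ (4*n-1) + ?p ^ i * 1))"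
    using FI1[OF assms] by simp
  also have "\<dots> = (\<Sum>m\<le>2*n. cc ?p (2*n) m * 1 ^ m * (XX ^ (4*n-1)) ^ (2*n-m))"
    by (rule qbin)
  also have "\<dots> = (\<Sum>m\<le>2*n. XX ^ CC n * (XX ^ EE n m * pp ?p (2*n) * inverse (?U m)))"
    by (rule sum.cong) (auto simp: tm[simplified])
  also have "\<dots> = XX ^ CC n * (\<Sum>m\<le>2*n. XX ^ EE n m * pp ?p (2*n) * inverse (?U m))"
    by (simp add: sum_distrib_left)
  finally show ?thesis by simp
qed


lemma ring_id8:
  fixes Y X :: "'a::comm_ring_1"
  shows "(1 + Y*X) * (1 + Y*X^3) * (1 - Y^2*X^4) * (1 - Y^2*X^8)
        * ((1 - Y*X) * (1 - Y*X^2) * (1 - Y*X^3) * (1 - Y*X^4))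
       = ((1 - Y^2*X^2) * (1 - Y^2*X^4) * (1 - Y^2*X^6) * (1 - Y^2*X^8))
        * ((1 - Y*X^2) * (1 - Y*X^4))"
proof -
  have a: "(1 + Y*X)*(1 - Y*X) = 1 - Y^2*X^2" by (simp add: algebra_simps power2_eq_square)
  have b: "(1 + Y*X^3)*(1 - Y*X^3) = 1 - Y^2*X^6"
  proof -
    have "X^3*X^3 = X^6" by (simp flip: power_add)
    then show ?thesis by (simp add: algebra_simps power2_eq_square)
  qed
  have "(1 + Y*X) * (1 + Y*X^3) * (1 - Y^2*X^4) * (1 - Y^2*X^8)
        * ((1 - Y*X) * (1 - Y*X^2) * (1 - Y*X^3) * (1 - Y*X^4))
      = ((1 + Y*X)*(1 - Y*X)) * ((1 + Y*X^3)*(1 - Y*X^3)) * (1 - Y^2*X^4) * (1 - Y^2*X^8)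
        * ((1 - Y*X^2) * (1 - Y*X^4))" by (simp only: mult_ac)
  then show ?thesis unfolding a b by (simp only: mult_ac)
qed

lemma pp_Suc4: "pp p (Suc (Suc (Suc (Suc N)))) = pp p N * ((1 - p^(N+1)) * (1 - p^(N+2)) * (1 - p^(N+3)) * (1 - p^(N+4)))"
  by (simp add: pp_Suc mult_ac eval_nat_numeral)

lemma pp_Suc2: "pp p (Suc (Suc N)) = pp p N * ((1 - p^(N+1)) * (1 - p^(N+2)))"
  by (simp add: pp_Suc mult_ac eval_nat_numeral)

lemma pw_eq: "a = b \<Longrightarrow> (x::'a::monoid_mult) ^ a = x ^ b" by simp

lemma Odd_Suc: "Odd (Suc n) = Odd n * ((1 + XX ^ (4*n+1)) * (1 + XX ^ (4*n+3)))"
proof -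
  have e: "2 * Suc n = Suc (Suc (2*n))" by simp
  have "Odd (Suc n) = Odd n * (1 + XX ^ (2*(2*n)+1)) * (1 + XX ^ (2*Suc(2*n)+1))"
    unfolding Odd_def by (simp only: e prod.lessThan_Suc)
  also have "2*(2*n)+1 = 4*n+1" by simp
  also have "2*Suc(2*n)+1 = 4*n+3" by simp
  finally show ?thesis by (simp only: mult.assoc)
qed

lemma finite_prod_id:
  "Odd n * pp (XX^4) (2*n) * pp XX (4*n) = pp (XX^2) (4*n) * pp (XX^2) (2*n)"
proof (induction n)
  case 0 then show ?case by (simp add: Odd_def)
next
  case (Suc n)
  let ?Y = "XX ^ (4*n)"
  have e4: "4 * Suc n = Suc (Suc (Suc (Suc (4*n))))" by simp
  have e2: "2 * Suc n = Suc (Suc (2*n))" by simp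
  have q1: "XX ^ (4*n + k) = ?Y * XX ^ k" for k by (simp add: power_add)
  have q2: "(XX^4) ^ (2*n + k) = ?Y^2 * XX^(4*k)" for k
    by (simp only: power_mult[symmetric] power_add[symmetric]) (rule pw_eq, simp)
  have q3: "(XX^2) ^ (4*n + k) = ?Y^2 * XX^(2*k)" for k
    by (simp only: power_mult[symmetric] power_add[symmetric]) (rule pw_eq, simp)
  have q4: "(XX^2) ^ (2*n + k) = ?Y * XX^(2*k)" for k
    by (simp only: power_mult[symmetric] power_add[symmetric]) (rule pw_eq, simp)
  have L: "Odd (Suc n) * pp (XX^4) (2*Suc n) * pp XX (4*Suc n) =
     (Odd n * pp (XX^4) (2*n) * pp XX (4*n)) *
     ((1 + ?Y*XX^1) * (1 + ?Y*XX^3) * (1 - ?Y^2*XX^(4*1)) * (1 - ?Y^2*XX^(4*2))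
        * ((1 - ?Y*XX^1) * (1 - ?Y*XX^2) * (1 - ?Y*XX^3) * (1 - ?Y*XX^4)))"
    unfolding Odd_Suc e4 e2 pp_Suc4 unfolding pp_Suc2 q1 q2 power_one_right[of XX] by (simp only: mult_ac)
  have R: "pp (XX^2) (4*Suc n) * pp (XX^2) (2*Suc n) =
     (pp (XX^2) (4*n) * pp (XX^2) (2*n)) *
     (((1 - ?Y^2*XX^(2*1)) * (1 - ?Y^2*XX^(2*2)) * (1 - ?Y^2*XX^(2*3)) * (1 - ?Y^2*XX^(2*4)))
        * ((1 - ?Y*XX^(2*1)) * (1 - ?Y*XX^(2*2))))"
    unfolding e4 e2 pp_Suc4 unfolding pp_Suc2 q3 q4 by (simp only: mult_ac)
  have r8: "(1 + ?Y*XX^1) * (1 + ?Y*XX^3) * (1 - ?Y^2*XX^(4*1)) * (1 - ?Y^2*XX^(4*2))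
        * ((1 - ?Y*XX^1) * (1 - ?Y*XX^2) * (1 - ?Y*XX^3) * (1 - ?Y*XX^4))
     = (((1 - ?Y^2*XX^(2*1)) * (1 - ?Y^2*XX^(2*2)) * (1 - ?Y^2*XX^(2*3)) * (1 - ?Y^2*XX^(2*4)))
        * ((1 - ?Y*XX^(2*1)) * (1 - ?Y*XX^(2*2))))"
    using ring_id8[of ?Y XX] by simp
  show ?case unfolding L R Suc r8 ..
qed


definition Th :: "nat \<Rightarrow> rat fps" where
  "Th a = Abs_fps (\<lambda>n. of_nat (card {j::int. int a * (2*j^2+j) = int n}))"

lemma abs_le_tri: "\<bar>d\<bar> \<le> 2*d^2 + d" "\<bar>d\<bar> \<le> 2*d^2 - d" for d :: int
proof -
  have sq: "d^2 = d*d" by (simp add: power2_eq_square)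
  have "\<bar>d\<bar> \<le> d*d"
  proof (cases "d = 0")
    case False
    then have "1 \<le> \<bar>d\<bar>" by simp
    then have "\<bar>d\<bar> * 1 \<le> \<bar>d\<bar> * \<bar>d\<bar>" by (intro mult_left_mono) auto
    then show ?thesis by (simp add: abs_mult_self_eq)
  qed simp
  then show "\<bar>d\<bar> \<le> 2*d^2 + d" "\<bar>d\<bar> \<le> 2*d^2 - d" unfolding sq by linarith+
qed


lemma sumX_coeff:
  "(\<Sum>m\<le>2*n. XX ^ EE n m) $ i = of_nat (card {m. m \<le> 2*n \<and> EE n m = i})"
proof -
  have "(\<Sum>m\<le>2*n. XX ^ EE n m) $ i = (\<Sum>m\<le>2*n. (if i = EE n m then 1 else 0 :: rat))"
    by (simp add: fps_sum_nth)
  also have "\<dots> = of_nat (card ({..2*n} \<inter> {m. i = EE n m}))"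
    by (simp add: sum.If_cases)
  also have "{..2*n} \<inter> {m. i = EE n m} = {m. m \<le> 2*n \<and> EE n m = i}" by auto
  finally show ?thesis .
qed

lemma card_EE:
  assumes "i < n"
  shows "card {m. m \<le> 2*n \<and> EE n m = i} = card {j::int. int 1 * (2*j^2+j) = int i}"
proof -
  let ?A = "{j::int. int 1 * (2*j^2+j) = int i}"
  let ?B = "{m. m \<le> 2*n \<and> EE n m = i}"
  have EEj: "EE n m = nat (2*j^2 + j)" if "int m - int n = - j" for m j
  proof -
    have h: "2*(int m - int n)^2 - (int m - int n) = 2*j^2 + j" unfolding that by simp
    show ?thesis by (simp only: EE_def h)
  qed
  have bnd: "\<bar>j\<bar> < int n" if "j \<in> ?A" for j
  proof -
    have "2*j^2+j = int i" using that by simp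
    then show ?thesis using abs_le_tri(1)[of j] assms by linarith
  qed
  have "bij_betw (\<lambda>j. nat (int n - j)) ?A ?B"
  proof (rule bij_betw_byWitness[where f' = "\<lambda>m. int n - int m"])
    show "\<forall>a\<in>?A. int n - int (nat (int n - a)) = a"
    proof
      fix a assume "a \<in> ?A"
      from bnd[OF this] have "0 \<le> int n - a" by linarith
      then show "int n - int (nat (int n - a)) = a" by simp
    qed
    show "\<forall>a\<in>?B. nat (int n - (int n - int a)) = a" by simp
    show "(\<lambda>j. nat (int n - j)) ` ?A \<subseteq> ?B"
    proof
      fix m assume "m \<in> (\<lambda>j. nat (int n - j)) ` ?A"
      then obtain j where j: "j \<in> ?A" "m = nat (int n - j)" by blast
      from bnd[OF j(1)] have b1: "0 \<le> int n - j" "int n - j \<le> 2 * int n" by linarith+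
      then have im: "int m = int n - j" using j(2) by simp
      then have "int m - int n = - j" by simp
      from EEj[OF this] have "EE n m = nat (2*j^2 + j)" .
      moreover have "2*j^2+j = int i" using j(1) by simp
      ultimately have "EE n m = i" by simp
      moreover have "m \<le> 2*n" using im b1 by linarith
      ultimately show "m \<in> ?B" by simp
    qed
    show "(\<lambda>m. int n - int m) ` ?B \<subseteq> ?A"
    proof
      fix j assume "j \<in> (\<lambda>m. int n - int m) ` ?B"
      then obtain m where m: "m \<in> ?B" "j = int n - int m" by blast
      then have "int m - int n = - j" by simp
      from EEj[OF this] have "EE n m = nat (2*j^2 + j)" .
      then have "nat (2*j^2+j) = i" using m(1) by simp
      moreover have "0 \<le> 2*j^2+j" using abs_le_tri(1)[of j] by linarith
      ultimately show "j \<in> ?A" by simp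
    qed
  qed
  then show ?thesis by (rule bij_betw_same_card[symmetric])
qed
lemma Th1_trunc:
  assumes "M \<le> n"
  shows "teq M (Th 1) (\<Sum>m\<le>2*n. XX ^ EE n m)"
  unfolding teq_def
proof (intro allI impI)
  fix i assume "i < M"
  then show "Th 1 $ i = (\<Sum>m\<le>2*n. XX ^ EE n m) $ i"
    unfolding sumX_coeff Th_def using card_EE[of i n] assms by simp
qed

lemma EE_small:
  assumes "EE n m < M" "m \<le> 2*n" "n = 2*M+2"
  shows "M \<le> m" "M \<le> 2*n - m"
proof -
  have "\<bar>int m - int n\<bar> \<le> 2*(int m - int n)^2 - (int m - int n)" by (rule abs_le_tri(2))
  moreover have "int (EE n m) = 2*(int m - int n)^2 - (int m - int n)"
    unfolding EE_def using EE_nonneg by simp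
  ultimately have "\<bar>int m - int n\<bar> < int M" using assms(1) by linarith
  then show "M \<le> m" "M \<le> 2*n - m" using assms(2,3) by auto
qed


lemma euler_nth0': "euler_f a $ 0 \<noteq> 0" by (simp add: euler_f_nth0)

lemma Gauss: "Th 1 * euler_f 1 = euler_f 2 ^ 2"
proof (rule teq_eq)
  fix M
  define n :: nat where "n = 2*M+2"
  have n1: "n \<ge> 1" "M \<le> n" "M \<le> 2*n" "M \<le> 4*n" unfolding n_def by auto
  let ?p = "XX^4"
  let ?U = "\<lambda>m. pp ?p m * pp ?p (2*n-m)"
  let ?f4 = "euler_f 4"
  have f4i: "?f4 * ?f4 * inverse (?f4 * ?f4) = 1"
    by (rule inverse_mult_eq_1') (simp add: fps_mult_nth_0 euler_f_nth0)
  have tm: "teq M (XX ^ EE n m * pp ?p (2*n) * inverse (?U m) * ?f4) (XX ^ EE n m)"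
    if m: "m \<le> 2*n" for m
  proof (cases "EE n m < M")
    case False
    then have le: "M \<le> EE n m" by simp
    have z1: "teq M (XX ^ EE n m * (pp ?p (2*n) * inverse (?U m) * ?f4)) 0"
      by (rule teq_Xpow[OF le])
    have z2: "teq M (XX ^ EE n m) 0"
      using teq_Xpow[OF le, of 1] by simp
    show ?thesis using teq_trans[OF z1 teq_sym[OF z2]] by (simp add: mult.assoc)
  next
    case True
    note sm = EE_small[OF True m n_def]
    have a: "teq M (pp ?p (2*n)) ?f4" by (rule teq_sym, rule euler_trunc) (use n1 in auto)
    have b1: "teq M (pp ?p m) ?f4" by (rule teq_sym, rule euler_trunc) (use sm in auto)
    have b2: "teq M (pp ?p (2*n-m)) ?f4" by (rule teq_sym, rule euler_trunc) (use sm in auto)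
    have b: "teq M (?U m) (?f4 * ?f4)" by (rule teq_mult[OF b1 b2])
    have U0: "?U m $ 0 \<noteq> 0" by (simp add: fps_mult_nth_0 pp4_nth0)
    have F0: "(?f4 * ?f4) $ 0 \<noteq> 0" by (simp add: fps_mult_nth_0 euler_f_nth0)
    have c: "teq M (inverse (?U m)) (inverse (?f4 * ?f4))"
      by (rule teq_inverse[OF b U0 F0])
    have d: "teq M (pp ?p (2*n) * inverse (?U m) * ?f4) (?f4 * inverse (?f4 * ?f4) * ?f4)"
      by (rule teq_mult[OF teq_mult[OF a c] teq_refl])
    have e0: "?f4 * inverse (?f4 * ?f4) * ?f4 = ?f4 * ?f4 * inverse (?f4 * ?f4)"
      by (simp only: mult_ac)
    have e: "?f4 * inverse (?f4 * ?f4) * ?f4 = 1" unfolding e0 by (rule f4i)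
    have g: "teq M (XX ^ EE n m * (pp ?p (2*n) * inverse (?U m) * ?f4)) (XX ^ EE n m * 1)"
      by (rule teq_mult[OF teq_refl]) (use d e in simp)
    show ?thesis using g by (simp only: mult.assoc mult_1_right)
  qed
  have T1: "teq M (Odd n * ?f4) (\<Sum>m\<le>2*n. XX ^ EE n m)"
    unfolding FI[OF n1(1)] sum_distrib_right by (rule teq_sum) (use tm in auto)
  have T2: "teq M (Th 1) (Odd n * pp ?p (2*n))"
  proof -
    have "teq M (Th 1) (Odd n * ?f4)"
      using Th1_trunc[OF n1(2)] T1 by (metis teq_sym teq_trans)
    moreover have "teq M (Odd n * ?f4) (Odd n * pp ?p (2*n))"
      by (intro teq_mult teq_refl euler_trunc) (use n1 in auto)
    ultimately show ?thesis by (rule teq_trans)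
  qed
  have T3: "teq M (euler_f 1) (pp XX (4*n))"
    using euler_trunc[of 1 M "4*n"] n1 by simp
  have T4: "teq M (pp (XX^2) (4*n) * pp (XX^2) (2*n)) (euler_f 2 * euler_f 2)"
    by (intro teq_mult; rule teq_sym, rule euler_trunc) (use n1 in auto)
  have "teq M (Th 1 * euler_f 1) (Odd n * pp ?p (2*n) * pp XX (4*n))"
    by (rule teq_mult[OF T2 T3])
  also have "Odd n * pp ?p (2*n) * pp XX (4*n) = pp (XX^2) (4*n) * pp (XX^2) (2*n)"
    by (rule finite_prod_id)
  finally show "teq M (Th 1 * euler_f 1) (euler_f 2 ^ 2)"
    using T4 by (simp add: power2_eq_square teq_trans)
qed



definition dil :: "nat \<Rightarrow> 'a::comm_ring_1 fps \<Rightarrow> 'a fps" where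
  "dil k A = Abs_fps (\<lambda>n. if k dvd n then A $ (n div k) else 0)"

definition ev :: "'a::comm_ring_1 fps \<Rightarrow> 'a fps" where
  "ev A = Abs_fps (\<lambda>n. A $ (2*n))"

lemma sum_mult_k:
  fixes g :: "nat \<Rightarrow> 'a::comm_monoid_add"
  assumes "k > 0"
  shows "(\<Sum>i=0..k*q. (if k dvd i then g (i div k) else 0)) = (\<Sum>j=0..q. g j)"
proof -
  have inj: "inj_on (\<lambda>j. k*j) {0..q}" using assms by (auto simp: inj_on_def)
  have "(\<Sum>j=0..q. g j) = (\<Sum>j=0..q. (\<lambda>i. if k dvd i then g (i div k) else 0) (k*j))"
    using assms by simp
  also have "\<dots> = (\<Sum>i\<in>(\<lambda>j. k*j) ` {0..q}. (if k dvd i then g (i div k) else 0))"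
    by (simp only: sum.reindex[OF inj] o_def)
  also have "\<dots> = (\<Sum>i=0..k*q. (if k dvd i then g (i div k) else 0))"
  proof (rule sum.mono_neutral_left)
    show "(\<lambda>j. k*j) ` {0..q} \<subseteq> {0..k*q}" by auto
    show "\<forall>i\<in>{0..k*q} - (\<lambda>j. k*j) ` {0..q}. (if k dvd i then g (i div k) else 0) = 0"
    proof
      fix i assume i: "i \<in> {0..k*q} - (\<lambda>j. k*j) ` {0..q}"
      show "(if k dvd i then g (i div k) else 0) = 0"
      proof (cases "k dvd i")
        case True
        then obtain j where j: "i = k*j" by blast
        with i assms have "j \<le> q" by auto
        with i j show ?thesis by auto
      qed simp
    qed
  qed simp
  finally show ?thesis by simp
qed

lemma dil_mult:
  assumes "k > 0"
  shows "dil k (A * B) = dil k A * dil k B"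
proof (rule fps_ext)
  fix n
  show "dil k (A * B) $ n = (dil k A * dil k B) $ n"
  proof (cases "k dvd n")
    case True
    then obtain q where q: "n = k*q" by blast
    have "(dil k A * dil k B) $ n = (\<Sum>i=0..k*q. (if k dvd i then A $ (i div k) * B $ (q - i div k) else 0))"
      unfolding fps_mult_nth q dil_def fps_nth_Abs_fps
    proof (rule sum.cong)
      fix i assume "i \<in> {0..k*q}"
      then have iq: "i \<le> k*q" by simp
      show "(if k dvd i then A $ (i div k) else 0) * (if k dvd (k * q - i) then B $ ((k * q - i) div k) else 0)
         = (if k dvd i then A $ (i div k) * B $ (q - i div k) else 0)"
      proof (cases "k dvd i")
        case True
        then obtain j where j: "i = k*j" by blast
        with iq assms have "j \<le> q" by auto
        then have "k*q - i = k*(q-j)" using j by (simp add: diff_mult_distrib2)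
        then show ?thesis using j assms by simp
      qed simp
    qed simp
    also have "\<dots> = (\<Sum>j=0..q. A $ j * B $ (q - j))"
      by (rule sum_mult_k[OF assms, of "\<lambda>j. A $ j * B $ (q - j)"])
    also have "\<dots> = dil k (A * B) $ n"
      using assms by (simp add: dil_def q fps_mult_nth)
    finally show ?thesis by simp
  next
    case False
    have "(dil k A * dil k B) $ n = 0"
      unfolding fps_mult_nth dil_def fps_nth_Abs_fps
    proof (rule sum.neutral, rule ballI)
      fix i assume "i \<in> {0..n}"
      then have "i \<le> n" by simp
      have "\<not> (k dvd i \<and> k dvd (n - i))"
      proof
        assume "k dvd i \<and> k dvd (n - i)"
        then have "k dvd (i + (n - i))" by (simp add: dvd_add)
        with \<open>i \<le> n\<close> False show False by simp
      qed
      then show "(if k dvd i then A $ (i div k) else 0) * (if k dvd (n - i) then B $ ((n - i) div k) else 0) = 0"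
        by auto
    qed
    then show ?thesis using False by (simp add: dil_def)
  qed
qed

lemma dil_one: "k > 0 \<Longrightarrow> dil k 1 = (1 :: 'a::comm_ring_1 fps)"
  by (rule fps_ext) (auto simp: dil_def fps_one_nth elim: dvdE)

lemma dil_diff: "dil k (A - B) = dil k A - dil k B"
  by (rule fps_ext) (simp add: dil_def)

lemma dil_X: "k > 0 \<Longrightarrow> dil k (fps_X ^ j :: 'a::comm_ring_1 fps) = fps_X ^ (k*j)"
  by (rule fps_ext) (auto simp: dil_def elim: dvdE)

lemma dil_nth0: "dil k A $ 0 = A $ 0" by (simp add: dil_def)

lemma dil_inverse:
  fixes A :: "'a::field fps"
  assumes "k > 0" "A $ 0 \<noteq> 0"
  shows "dil k (inverse A) = inverse (dil k A)"
proof -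
  have "dil k (inverse A) * dil k A = dil k (inverse A * A)" by (rule dil_mult[OF assms(1), symmetric])
  also have "\<dots> = 1" using inverse_mult_eq_1[OF assms(2)] dil_one[OF assms(1)] by simp
  finally have h1: "dil k (inverse A) * dil k A = 1" .
  have "dil k A * inverse (dil k A) = 1"
    by (rule inverse_mult_eq_1') (simp add: dil_nth0 assms)
  then have "dil k (inverse A) = dil k (inverse A) * (dil k A * inverse (dil k A))" by simp
  also have "\<dots> = (dil k (inverse A) * dil k A) * inverse (dil k A)" by (simp only: mult.assoc)
  also have "\<dots> = inverse (dil k A)" using h1 by simp
  finally show ?thesis .
qed

lemma teq_dil: assumes "k > 0" "teq M A B" shows "teq M (dil k A) (dil k B)"
  unfolding teq_def
proof (intro allI impI)
  fix n assume n: "n < M"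
  show "dil k A $ n = dil k B $ n"
  proof (cases "k dvd n")
    case True
    then obtain q where q: "n = k*q" by blast
    have "q \<le> k*q" using assms(1) by simp
    then have "q < M" using n q by linarith
    then show ?thesis using assms(2) q assms(1) by (simp add: dil_def teq_def)
  qed (simp add: dil_def)
qed

lemma dil_pp:
  assumes "k > 0"
  shows "dil k (pp (fps_X ^ a) N :: 'a::comm_ring_1 fps) = pp (fps_X ^ (k*a)) N"
proof (induction N)
  case 0 then show ?case using dil_one[OF assms] by simp
next
  case (Suc N)
  have h: "dil k (1 - (fps_X ^ a) ^ Suc N :: 'a fps) = 1 - (fps_X ^ (k*a)) ^ Suc N"
    unfolding dil_diff dil_one[OF assms] power_mult[symmetric] dil_X[OF assms]
    by (simp add: algebra_simps)
  show ?case unfolding pp_Suc dil_mult[OF assms] Suc.IH h ..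
qed

lemma dil_euler:
  assumes "k \<ge> 1" "a \<ge> 1"
  shows "dil k (euler_f a) = euler_f (k*a)"
proof (rule teq_eq)
  fix M
  have k0: "k > 0" using assms by simp
  have "teq M (dil k (euler_f a)) (dil k (pp (fps_X ^ a) M))"
    by (rule teq_dil[OF k0 euler_trunc]) (use assms in auto)
  also have "dil k (pp (fps_X ^ a) M) = pp (fps_X ^ (k*a)) M" by (rule dil_pp[OF k0])
  finally have c1: "teq M (dil k (euler_f a)) (pp (fps_X ^ (k*a)) M)" .
  have "1 \<le> k*a" using assms by simp
  then have "teq M (euler_f (k*a)) (pp (fps_X ^ (k*a)) M)" by (rule euler_trunc) simp
  with c1 show "teq M (dil k (euler_f a)) (euler_f (k*a))" by (metis teq_sym teq_trans)
qed

lemma ev_mult_dil2: "ev (A * dil 2 B) = ev A * B"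
proof (rule fps_ext)
  fix n
  have "ev (A * dil 2 B) $ n = (dil 2 B * A) $ (2*n)" by (simp add: ev_def mult.commute)
  also have "\<dots> = (\<Sum>i=0..2*n. (if 2 dvd i then B $ (i div 2) * A $ (2*(n - i div 2)) else 0))"
    unfolding fps_mult_nth dil_def
  proof (rule sum.cong)
    fix i assume "i \<in> {0..2*n}"
    then show "Abs_fps (\<lambda>n. if 2 dvd n then B $ (n div 2) else 0) $ i * A $ (2 * n - i) =
         (if 2 dvd i then B $ (i div 2) * A $ (2 * (n - i div 2)) else 0)"
      by (auto elim!: dvdE simp: diff_mult_distrib2)
  qed simp
  also have "\<dots> = (\<Sum>j=0..n. B $ j * A $ (2*(n - j)))"
    by (rule sum_mult_k[of 2 "\<lambda>j. B $ j * A $ (2*(n - j))" n]) simp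
  also have "\<dots> = (B * ev A) $ n"
    by (simp add: fps_mult_nth ev_def)
  also have "B * ev A = ev A * B" by (rule mult.commute)
  finally show "ev (A * dil 2 B) $ n = (ev A * B) $ n" .
qed


lemma Th_nth: "Th a $ n = of_nat (card {j::int. int a * (2*j^2+j) = int n})"
  by (simp add: Th_def)

lemma T_nonneg: "(0::int) \<le> 2*j^2+j"
  using abs_le_tri(1)[of j] by linarith

lemma dil_Th:
  assumes "k > 0"
  shows "dil k (Th a) = Th (k*a)"
proof (rule fps_ext)
  fix n
  show "dil k (Th a) $ n = Th (k*a) $ n"
  proof (cases "k dvd n")
    case True
    then obtain q where q: "n = k*q" by blast
    have "{j::int. int a * (2*j^2+j) = int q} = {j::int. int (k*a) * (2*j^2+j) = int n}"
      using assms unfolding q by (auto simp: mult.assoc)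
    then show ?thesis using assms q by (simp add: dil_def Th_nth)
  next
    case False
    have "{j::int. int (k*a) * (2*j^2+j) = int n} = {}"
    proof (rule ccontr)
      assume "{j::int. int (k*a) * (2*j^2+j) = int n} \<noteq> {}"
      then obtain j where j: "int k * (int a * (2*j^2+j)) = int n" by (auto simp: mult.assoc)
      then have "int k dvd int n" by (metis dvd_triv_left)
      with False show False by simp
    qed
    then show ?thesis using False by (simp add: dil_def Th_nth)
  qed
qed

lemma finS:
  assumes "a \<ge> 1"
  shows "finite {j::int. int a * (2*j^2+j) = int i}"
proof (rule finite_subset)
  show "{j::int. int a * (2*j^2+j) = int i} \<subseteq> {- int i..int i}"
  proof
    fix j assume "j \<in> {j::int. int a * (2*j^2+j) = int i}"
    then have e: "int a * (2*j^2+j) = int i" by simp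
    have "2*j^2+j \<le> int a * (2*j^2+j)"
      using T_nonneg[of j] assms mult_right_mono[of 1 "int a" "2*j^2+j"] by simp
    then have "\<bar>j\<bar> \<le> int i" using e abs_le_tri(1)[of j] by linarith
    then show "j \<in> {- int i..int i}" by auto
  qed
qed simp

lemma PC:
  assumes "a \<ge> 1" "b \<ge> 1"
  shows "(Th a * Th b) $ n = of_nat (card {p::int\<times>int. int a * (2*(fst p)^2 + fst p) + int b * (2*(snd p)^2 + snd p) = int n})"
proof -
  define S where "S = (\<lambda>c i. {j::int. int c * (2*j^2+j) = int i})"
  have fin: "finite (S c i)" if "c \<ge> 1" for c i unfolding S_def by (rule finS[OF that])
  have "(Th a * Th b) $ n = (\<Sum>i=0..n. of_nat (card (S a i)) * of_nat (card (S b (n - i))))"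
    by (simp add: fps_mult_nth Th_nth S_def)
  also have "\<dots> = of_nat (\<Sum>i=0..n. card (S a i \<times> S b (n - i)))"
    by (simp add: card_cartesian_product)
  also have "(\<Sum>i=0..n. card (S a i \<times> S b (n - i))) = card (\<Union>i\<in>{0..n}. S a i \<times> S b (n - i))"
  proof (rule card_UN_disjoint[symmetric])
    show "finite {0..n}" by simp
    show "\<forall>i\<in>{0..n}. finite (S a i \<times> S b (n - i))" using fin assms by blast
    show "\<forall>i\<in>{0..n}. \<forall>j\<in>{0..n}. i \<noteq> j \<longrightarrow> (S a i \<times> S b (n - i)) \<inter> (S a j \<times> S b (n - j)) = {}"
      by (auto simp: S_def)
  qed
  also have "(\<Union>i\<in>{0..n}. S a i \<times> S b (n - i)) = {p::int\<times>int. int a * (2*(fst p)^2 + fst p) + int b * (2*(snd p)^2 + snd p) = int n}"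
  proof (rule set_eqI)
    fix p :: "int \<times> int"
    obtain x y where p: "p = (x, y)" by (cases p)
    have nx: "0 \<le> int a * (2*x^2+x)" using T_nonneg[of x] by simp
    have ny: "0 \<le> int b * (2*y^2+y)" using T_nonneg[of y] by simp
    show "p \<in> (\<Union>i\<in>{0..n}. S a i \<times> S b (n - i)) \<longleftrightarrow> p \<in> {p. int a * (2*(fst p)^2 + fst p) + int b * (2*(snd p)^2 + snd p) = int n}"
    proof
      assume "p \<in> (\<Union>i\<in>{0..n}. S a i \<times> S b (n - i))"
      then obtain i where i: "i \<le> n" "int a * (2*x^2+x) = int i" "int b * (2*y^2+y) = int (n - i)"
        unfolding p S_def by auto
      then show "p \<in> {p. int a * (2*(fst p)^2 + fst p) + int b * (2*(snd p)^2 + snd p) = int n}"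
        unfolding p by (simp add: of_nat_diff)
    next
      assume "p \<in> {p. int a * (2*(fst p)^2 + fst p) + int b * (2*(snd p)^2 + snd p) = int n}"
      then have e: "int a * (2*x^2+x) + int b * (2*y^2+y) = int n" unfolding p by simp
      define i where "i = nat (int a * (2*x^2+x))"
      have ii: "int i = int a * (2*x^2+x)" unfolding i_def using nx by simp
      have "i \<le> n" using e ii ny by linarith
      moreover have "int (n - i) = int b * (2*y^2+y)" using e ii \<open>i \<le> n\<close> by (simp add: of_nat_diff)
      ultimately show "p \<in> (\<Union>i\<in>{0..n}. S a i \<times> S b (n - i))"
        unfolding p S_def using ii by (intro UN_I[of i]) auto
    qed
  qed
  finally show ?thesis .
qed


lemma P1: "2*(4*b-3*c)^2 + (4*b-3*c) + 15*(2*c^2+c) = 2*(3*(2*(2*c-b)^2 + (2*c-b)) + 5*(2*b^2+b))"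
  for b c :: int
  by (simp add: power2_eq_square algebra_simps)

lemma P2: "2*(3*c+1-4*b)^2 + (3*c+1-4*b) + 15*(2*(-c-1)^2+(-c-1)) = 2*(3*(2*(2*c+1-b)^2 + (2*c+1-b)) + 5*(2*b^2+b))"
  for b c :: int
  by (simp add: power2_eq_square algebra_simps)

definition Fm :: "int \<times> int \<Rightarrow> int \<times> int" where
  "Fm p = (let a = fst p; b = snd p; c = (a+b) div 2 in
     if even (a+b) then (4*b-3*c, c) else (3*c+1-4*b, -c-1))"

definition Gm :: "int \<times> int \<Rightarrow> int \<times> int" where
  "Gm p = (let k = fst p; l = snd p; d = (k+3*l) div 4 in
     if (k+3*l) mod 4 = 0 then (2*l-d, d) else (d-2*l, -1-d))"

lemma Fm_even: "a + b = 2*c \<Longrightarrow> Fm (a, b) = (4*b-3*c, c)"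
  unfolding Fm_def Let_def by simp

lemma Fm_odd: assumes "a + b = 2*c + 1" shows "Fm (a, b) = (3*c+1-4*b, -c-1)"
proof -
  have "(a+b) div 2 = c" "\<not> even (a+b)" using assms by presburger+
  then show ?thesis unfolding Fm_def Let_def by simp
qed

lemma Gm_0: "k + 3*l = 4*d \<Longrightarrow> Gm (k, l) = (2*l-d, d)"
  unfolding Gm_def Let_def by simp

lemma Gm_2: assumes "k + 3*l = 4*d + 2" shows "Gm (k, l) = (d-2*l, -1-d)"
proof -
  have "(k+3*l) div 4 = d" "(k+3*l) mod 4 \<noteq> 0" using assms by presburger+
  then show ?thesis unfolding Gm_def Let_def by simp
qed

lemma GF: "Gm (Fm (a, b)) = (a, b)"
proof (cases "even (a+b)")
  case True
  then obtain c where c: "a + b = 2*c" by (metis evenE)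
  have "(4*b-3*c) + 3*c = 4*b" by simp
  then show ?thesis using c by (simp add: Fm_even Gm_0)
next
  case False
  then obtain c where c: "a + b = 2*c + 1" by (metis oddE)
  have "(3*c+1-4*b) + 3*(-c-1) = 4*(-b-1) + 2" by simp
  then have g: "Gm (3*c+1-4*b, -c-1) = ((-b-1) - 2*(-c-1), -1-(-b-1))" by (rule Gm_2)
  show ?thesis unfolding Fm_odd[OF c] g using c by simp
qed

lemma par_aux: "k + l = 2*(X::int) \<Longrightarrow> (k + 3*l) mod 4 = 0 \<or> (k + 3*l) mod 4 = 2"
  by presburger

lemma parity:
  assumes "2*k^2+k + 15*(2*l^2+l) = 2*(n::int)"
  shows "(k + 3*l) mod 4 = 0 \<or> (k + 3*l) mod 4 = 2"
proof -
  define X where "X = n - k^2 - 15*l^2 - 7*l"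
  have "k + l = 2*X" unfolding X_def using assms by (simp add: algebra_simps)
  then show ?thesis by (rule par_aux)
qed

lemma FG:
  assumes "2*k^2+k + 15*(2*l^2+l) = 2*(n::int)"
  shows "Fm (Gm (k, l)) = (k, l)" "3*(2*(fst (Gm (k,l)))^2 + fst (Gm (k,l))) + 5*(2*(snd (Gm (k,l)))^2 + snd (Gm (k,l))) = n"
proof -
  have "Fm (Gm (k, l)) = (k, l) \<and> 3*(2*(fst (Gm (k,l)))^2 + fst (Gm (k,l))) + 5*(2*(snd (Gm (k,l)))^2 + snd (Gm (k,l))) = n"
  proof (cases "(k + 3*l) mod 4 = 0")
    case True
    define d where "d = (k + 3*l) div 4"
    have kd: "k + 3*l = 4*d" unfolding d_def using True by presburger
    have g: "Gm (k, l) = (2*l-d, d)" by (rule Gm_0[OF kd])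
    have "(2*l-d) + d = 2*l" by simp
    then have f: "Fm (2*l-d, d) = (4*d-3*l, l)" by (rule Fm_even)
    have k: "k = 4*d-3*l" using kd by simp
    have "2*(3*(2*(2*l-d)^2 + (2*l-d)) + 5*(2*d^2+d)) = 2*n"
      using assms unfolding k P1[of d l, symmetric] .
    then show ?thesis using g f k by simp
  next
    case False
    then have m2: "(k + 3*l) mod 4 = 2" using parity[OF assms] by simp
    define d where "d = (k + 3*l) div 4"
    have kd: "k + 3*l = 4*d + 2" unfolding d_def using m2 by presburger
    have g: "Gm (k, l) = (d-2*l, -1-d)" by (rule Gm_2[OF kd])
    have "(d-2*l) + (-1-d) = 2*(-l-1) + 1" by simp
    then have f: "Fm (d-2*l, -1-d) = (3*(-l-1)+1-4*(-1-d), -(-l-1)-1)" by (rule Fm_odd)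
    have k: "k = 3*(-l-1)+1-4*(-1-d)" using kd by simp
    have l: "l = -(-l-1)-1" by simp
    have e2: "2*(d-2*l) = 2*(-l-1)+1-(-1-d) + (d-2*l) - (2*(-l-1)+1-(-1-d)) + (d - 2*l)" by simp
    have "2*(3*(2*(2*(-l-1)+1-(-1-d))^2 + (2*(-l-1)+1-(-1-d))) + 5*(2*(-1-d)^2+(-1-d))) = 2*n"
      using assms P2[of "-l-1" "-1-d"] unfolding k by (simp add: algebra_simps)
    moreover have "2*(-l-1)+1-(-1-d) = d-2*l" by simp
    ultimately have "3*(2*(d-2*l)^2 + (d-2*l)) + 5*(2*(-1-d)^2+(-1-d)) = n" by simp
    then show ?thesis using g f k by simp
  qed
  then show "Fm (Gm (k, l)) = (k, l)" "3*(2*(fst (Gm (k,l)))^2 + fst (Gm (k,l))) + 5*(2*(snd (Gm (k,l)))^2 + snd (Gm (k,l))) = n"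
    by simp_all
qed

lemma F_eq:
  assumes "3*(2*a^2+a) + 5*(2*b^2+b) = (n::int)"
  shows "2*(fst (Fm (a,b)))^2 + fst (Fm (a,b)) + 15*(2*(snd (Fm (a,b)))^2 + snd (Fm (a,b))) = 2*n"
proof (cases "even (a+b)")
  case True
  then obtain c where c: "a + b = 2*c" by (metis evenE)
  have a: "a = 2*c - b" using c by simp
  have f: "Fm (a,b) = (4*b-3*c, c)" by (rule Fm_even[OF c])
  have e: "3*(2*(2*c-b)^2 + (2*c-b)) + 5*(2*b^2+b) = n" using assms unfolding a .
  show ?thesis by (simp only: f fst_conv snd_conv P1 e)
next
  case False
  then obtain c where c: "a + b = 2*c + 1" by (metis oddE)
  have a: "a = 2*c + 1 - b" using c by simp
  have f: "Fm (a,b) = (3*c+1-4*b, -c-1)" by (rule Fm_odd[OF c])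
  have e: "3*(2*(2*c+1-b)^2 + (2*c+1-b)) + 5*(2*b^2+b) = n" using assms unfolding a .
  show ?thesis by (simp only: f fst_conv snd_conv P2 e)
qed

lemma F6: "ev (Th 1 * Th 15) = Th 3 * Th 5"
proof (rule fps_ext)
  fix n
  let ?P = "{p::int\<times>int. int 1 * (2*(fst p)^2 + fst p) + int 15 * (2*(snd p)^2 + snd p) = int (2*n)}"
  let ?Q = "{p::int\<times>int. int 3 * (2*(fst p)^2 + fst p) + int 5 * (2*(snd p)^2 + snd p) = int n}"
  have "bij_betw Fm ?Q ?P"
  proof (rule bij_betw_byWitness[where f' = Gm])
    show "\<forall>a\<in>?Q. Gm (Fm a) = a" using GF by auto
    show "\<forall>a\<in>?P. Fm (Gm a) = a"
    proof
      fix p assume "p \<in> ?P"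
      then show "Fm (Gm p) = p" using FG(1)[of "fst p" "snd p" "int n"] by (cases p) simp
    qed
    show "Fm ` ?Q \<subseteq> ?P"
    proof
      fix q assume "q \<in> Fm ` ?Q"
      then obtain p where p: "p \<in> ?Q" "q = Fm p" by blast
      obtain a b where ab: "p = (a, b)" by (cases p)
      show "q \<in> ?P" using F_eq[of a b "int n"] p ab by simp
    qed
    show "Gm ` ?P \<subseteq> ?Q"
    proof
      fix q assume "q \<in> Gm ` ?P"
      then obtain p where p: "p \<in> ?P" "q = Gm p" by blast
      obtain k l where kl: "p = (k, l)" by (cases p)
      show "q \<in> ?Q" using FG(2)[of k l "int n"] p kl by simp
    qed
  qed
  then have c: "card ?Q = card ?P" by (rule bij_betw_same_card)
  have p1: "(Th 1 * Th 15) $ (2*n) = of_nat (card ?P)" by (rule PC) simp_all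
  have p2: "(Th 3 * Th 5) $ n = of_nat (card ?Q)" by (rule PC) simp_all
  show "ev (Th 1 * Th 15) $ n = (Th 3 * Th 5) $ n"
    unfolding ev_def fps_nth_Abs_fps p1 p2 c ..
qed


lemma Gauss_k:
  assumes "k \<ge> 1"
  shows "Th k * euler_f k = euler_f (2*k) ^ 2"
proof -
  have k0: "k > 0" using assms by simp
  have "dil k (Th 1 * euler_f 1) = dil k (euler_f 2 ^ 2)" by (simp only: Gauss)
  then have "dil k (Th 1) * dil k (euler_f 1) = dil k (euler_f 2) ^ 2"
    by (simp only: dil_mult[OF k0] power2_eq_square)
  then show ?thesis
    using dil_Th[OF k0, of 1] dil_euler[OF assms, of 1] dil_euler[OF assms, of 2]
    by (simp add: mult.commute)
qed

lemma unit_e: "euler_f k * inverse (euler_f k) = 1"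
  by (rule inverse_mult_eq_1') (simp add: euler_f_nth0)

lemma Th_eq: "k \<ge> 1 \<Longrightarrow> Th k = euler_f (2*k) ^ 2 * inverse (euler_f k)"
proof -
  assume k: "k \<ge> 1"
  have "Th k = Th k * (euler_f k * inverse (euler_f k))" using unit_e by simp
  also have "\<dots> = (Th k * euler_f k) * inverse (euler_f k)" by (simp only: mult.assoc)
  finally show ?thesis using Gauss_k[OF k] by simp
qed

lemma alg1:
  fixes a1 a2 a6 a10 a15 a30 i1 i2 i15 i30 :: "'a::comm_ring_1"
  assumes "a2*i2 = 1" "a30*i30 = 1"
  shows "(a2^2*i1) * (a30^2*i15) * (a6*a10*(i2^2*i30^2)) = a6*a10*(i1*i15)"
proof -
  have "(a2^2*i1) * (a30^2*i15) * (a6*a10*(i2^2*i30^2)) = (a2*i2)^2 * (a30*i30)^2 * (a6*a10*(i1*i15))"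
    by (simp add: power_mult_distrib mult_ac)
  then show ?thesis using assms by simp
qed

lemma alg2:
  fixes a1 a3 a5 a6 a10 a15 i1 i3 i5 i15 :: "'a::comm_ring_1"
  assumes "a3*i3 = 1" "a5*i5 = 1"
  shows "(a6^2*i3) * (a10^2*i5) * (a3*a5*(i1^2*i15^2)) = (a6*a10*(i1*i15))^2"
proof -
  have "(a6^2*i3) * (a10^2*i5) * (a3*a5*(i1^2*i15^2)) = (a3*i3) * (a5*i5) * (a6*a10*(i1*i15))^2"
    by (simp add: power_mult_distrib mult_ac)
  then show ?thesis using assms by simp
qed

lemma main: "ev P_gf = P_gf ^ 2"
proof -
  let ?f = euler_f
  let ?i = "\<lambda>k. inverse (euler_f k)"
  have e0: "?f k $ 0 \<noteq> 0" for k by (simp add: euler_f_nth0)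
  have P: "P_gf = ?f 6 * ?f 10 * (?i 1 * ?i 15)"
    unfolding P_gf_def by (simp add: fps_inverse_mult)
  define Q where "Q = ?f 3 * ?f 5 * (?i 1 ^ 2 * ?i 15 ^ 2)"
  have dQ: "dil 2 Q = ?f 6 * ?f 10 * (?i 2 ^ 2 * ?i 30 ^ 2)"
  proof -
    have d: "dil 2 (?f k) = ?f (2*k)" if "k \<ge> 1" for k using dil_euler[of 2 k] that by simp
    have di: "dil 2 (?i k) = ?i (2*k)" if "k \<ge> 1" for k
      using dil_inverse[of 2 "?f k"] e0 d[OF that] by simp
    show ?thesis unfolding Q_def
      by (simp add: dil_mult power2_eq_square d di)
  qed
  have T1: "Th 1 = ?f 2 ^ 2 * ?i 1" using Th_eq[of 1] by simp
  have T15: "Th 15 = ?f 30 ^ 2 * ?i 15" using Th_eq[of 15] by simp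
  have T3: "Th 3 = ?f 6 ^ 2 * ?i 3" using Th_eq[of 3] by simp
  have T5: "Th 5 = ?f 10 ^ 2 * ?i 5" using Th_eq[of 5] by simp
  have P2: "P_gf = (Th 1 * Th 15) * dil 2 Q"
    unfolding dQ T1 T15 P by (rule sym, rule alg1) (rule unit_e)+
  have "ev P_gf = Th 3 * Th 5 * Q"
    unfolding P2 ev_mult_dil2 F6 ..
  also have "\<dots> = P_gf ^ 2"
    unfolding T3 T5 Q_def P by (rule alg2) (rule unit_e)+
  finally show ?thesis .
qed

theorem theorem3p5:
  shows "convolutive 2 P"
proof -
  have a: "Abs_fps P = P_gf" by (rule fps_ext) (simp add: P_def)
  have b: "Abs_fps (\<lambda>n. P (2*n)) = ev P_gf" by (simp add: ev_def P_def)
  show ?thesis unfolding convolutive_def a b by (rule main)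
qed


end
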